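(* Let $\mathcal{O}$ be the ring of integers of $\mathbb{Q}(\sqrt{-11})$ and $X=\frac12(1+\sqrt{-11})$. Then: (i) $X$ is an $\mathbb{S}[\pm1]$-generator of $\mathcal{O}$, i.e. every element of $\mathcal{O}$ can be written uniquely as a finite sum $\sum_j\alpha_jX^j$ with $\alpha_j\in\{-1,0,1\}$, and its hold is given by $1+1=-1+X-X^2$; (ii) with $R_m=\mathcal{O}/X^m\mathcal{O}$, the projective limit $\varprojlim_m R_m$ is the ring $W(\mathbb{F}_3)=\mathbb{Z}_3$.
   Context: $W(\mathbb{F}_3)$ is the ring of $3$-typical Witt vectors of $\mathbb{F}_3$, identified with the $3$-adic integers $\mathbb{Z}_3$. The hold records, for each $\xi\in\{\pm1\}$, the unique representation of $\xi+1$ as such a sum; here the only nontrivial case is $1+1$. *)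

theory Defs
  imports Complex_Main "HOL-Algebra.Algebra"
begin

definition Xg :: complex where
  "Xg = (1 + \<i> * complex_of_real (sqrt 11)) / 2"

text \<open>The ring of integers of Q(sqrt(-11)), which is Z[X] (as -11 = 1 mod 4),
  realised as a subring of the complex numbers.\<close>
definition O_set :: "complex set" where
  "O_set = {of_int a + of_int b * Xg | a b :: int. True}"

definition O_ring :: "complex ring" where
  "O_ring = \<lparr>carrier = O_set, monoid.mult = (*), monoid.one = 1, ring.zero = 0, ring.add = (+)\<rparr>"

definition digit_seq :: "(nat \<Rightarrow> int) \<Rightarrow> bool" where
  "digit_seq \<alpha> \<longleftrightarrow> finite {j. \<alpha> j \<noteq> 0} \<and> (\<forall>j. \<alpha> j \<in> {-1, 0, 1})"

definition digit_val :: "(nat \<Rightarrow> int) \<Rightarrow> complex" where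
  "digit_val \<alpha> = (\<Sum>j\<in>{j. \<alpha> j \<noteq> 0}. of_int (\<alpha> j) * Xg ^ j)"

text \<open>Projective limit of the chain of quotient rings A/I_0 <- A/I_1 <- ...,
  for a decreasing chain of ideals I_m; the transition maps send a coset of
  I_(m+1) to the coset of I_m containing it, so compatibility is inclusion.\<close>
definition quot_limit :: "('a, 'b) ring_scheme \<Rightarrow> (nat \<Rightarrow> 'a set) \<Rightarrow> (nat \<Rightarrow> 'a set) ring" where
  "quot_limit A I =
    \<lparr>carrier = {f. (\<forall>m. f m \<in> carrier (A Quot (I m))) \<and> (\<forall>m. f (Suc m) \<subseteq> f m)},
     monoid.mult = (\<lambda>f g m. f m \<otimes>\<^bsub>A Quot (I m)\<^esub> g m),
     monoid.one = (\<lambda>m. \<one>\<^bsub>A Quot (I m)\<^esub>),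
     ring.zero = (\<lambda>m. \<zero>\<^bsub>A Quot (I m)\<^esub>),
     ring.add = (\<lambda>f g m. f m \<oplus>\<^bsub>A Quot (I m)\<^esub> g m)\<rparr>"

text \<open>The 3-adic integers Z_3 = W(F_3), as the projective limit of Z/3^m Z.\<close>
definition Z3_ring :: "(nat \<Rightarrow> int set) ring" where
  "Z3_ring = quot_limit \<Z> (\<lambda>m. PIdl\<^bsub>\<Z>\<^esub> (3 ^ m))"

end

theory Submission
  imports Defs
begin


definition oe :: "int \<Rightarrow> int \<Rightarrow> complex" where
  "oe a b = of_int a + of_int b * Xg"

lemma Xg_sq: "Xg ^ 2 = Xg - 3"
proof -
  have s: "complex_of_real (sqrt 11) ^ 2 = 11"
    by (metis of_real_numeral of_real_power real_sqrt_pow2 zero_le_numeral)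
  show ?thesis unfolding Xg_def
    by (simp add: power2_eq_square field_simps s[unfolded power2_eq_square] algebra_simps)
qed

lemma Im_Xg: "Im Xg = sqrt 11 / 2" by (simp add: Xg_def)
lemma Re_Xg: "Re Xg = 1 / 2" by (simp add: Xg_def)

lemma oe_inj: "oe a b = oe c d \<longleftrightarrow> a = c \<and> b = d"
proof
  assume h: "oe a b = oe c d"
  have "Im (oe a b) = Im (oe c d)" using h by simp
  hence "b = d" by (simp add: oe_def Im_Xg)
  moreover have "Re (oe a b) = Re (oe c d)" using h by simp
  ultimately show "a = c \<and> b = d" by (simp add: oe_def Re_Xg)
qed simp

lemma O_set_oe: "O_set = range (\<lambda>(a,b). oe a b)"
  unfolding O_set_def oe_def by auto

lemma O_memE: assumes "z \<in> O_set" obtains a b where "z = oe a b"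
  using assms unfolding O_set_oe by auto

lemma oe_in [simp]: "oe a b \<in> O_set" unfolding O_set_oe by auto

lemma oe_add: "oe a b + oe p q = oe (a + p) (b + q)" by (simp add: oe_def algebra_simps)
lemma oe_neg: "- oe a b = oe (-a) (-b)" by (simp add: oe_def algebra_simps)
lemma oe_diff: "oe a b - oe p q = oe (a - p) (b - q)" by (simp add: oe_def algebra_simps)
lemma oe_mult: "oe a b * oe p q = oe (a*p - 3*b*q) (a*q + b*p + b*q)"
proof -
  have "oe a b * oe p q = of_int (a*p) + of_int (a*q + b*p) * Xg + of_int (b*q) * Xg^2"
    by (simp add: oe_def algebra_simps power2_eq_square)
  also have "\<dots> = oe (a*p - 3*b*q) (a*q + b*p + b*q)"
    by (simp add: Xg_sq oe_def algebra_simps)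
  finally show ?thesis .
qed
lemma oe_int: "of_int n = oe n 0" by (simp add: oe_def)
lemma oe_X: "Xg = oe 0 1" by (simp add: oe_def)

lemma O_add [simp]: "x \<in> O_set \<Longrightarrow> y \<in> O_set \<Longrightarrow> x + y \<in> O_set"
  by (auto elim!: O_memE simp: oe_add)
lemma O_neg [simp]: "x \<in> O_set \<Longrightarrow> - x \<in> O_set"
  by (auto elim!: O_memE simp: oe_neg)
lemma O_diff [simp]: "x \<in> O_set \<Longrightarrow> y \<in> O_set \<Longrightarrow> x - y \<in> O_set"
  by (auto elim!: O_memE simp: oe_diff)
lemma O_mult [simp]: "x \<in> O_set \<Longrightarrow> y \<in> O_set \<Longrightarrow> x * y \<in> O_set"
  by (auto elim!: O_memE simp: oe_mult)
lemma O_int [simp]: "of_int n \<in> O_set" by (simp add: oe_int)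
lemma O_0 [simp]: "0 \<in> O_set" using O_int[of 0] by simp
lemma O_1 [simp]: "1 \<in> O_set" using O_int[of 1] by simp
lemma O_X [simp]: "Xg \<in> O_set" by (simp add: oe_X)
lemma O_pow [simp]: "x \<in> O_set \<Longrightarrow> x ^ n \<in> O_set"
  by (induction n) auto

lemma Xg_nz: "Xg \<noteq> 0" using Im_Xg by auto

lemma X_dvd_int: assumes "of_int k = Xg * w" "w \<in> O_set" shows "3 dvd k"
proof -
  obtain c d where w: "w = oe c d" using assms(2) by (rule O_memE)
  have "oe k 0 = oe (-3*d) (c+d)" using assms(1) by (simp add: w oe_X oe_mult oe_int)
  thus ?thesis by (simp add: oe_inj)
qed

lemma unit_pow: "\<exists>u\<in>O_set. (1 - Xg) ^ m = 1 - Xg * u"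
proof (induction m)
  case 0 then show ?case by (intro bexI[of _ 0]) auto
next
  case (Suc m)
  then obtain u where u: "u \<in> O_set" "(1 - Xg) ^ m = 1 - Xg * u" by blast
  show ?case
    by (intro bexI[of _ "u + 1 - Xg * u"]) (auto simp: u algebra_simps)
qed

lemma three_eq: "Xg * (1 - Xg) = 3"
  using Xg_sq by (simp add: algebra_simps power2_eq_square)



definition Iset :: "nat \<Rightarrow> complex set" where
  "Iset m = {x * Xg ^ m | x. x \<in> O_set}"

lemma three_pow: "(3::complex) ^ m = Xg ^ m * (1 - Xg) ^ m"
  using three_eq by (metis power_mult_distrib)

lemma int_in_I_iff: "of_int n \<in> Iset m \<longleftrightarrow> (3::int) ^ m dvd n"
proof
  assume "(3::int) ^ m dvd n"
  then obtain k where n: "n = 3 ^ m * k" by auto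
  have "of_int n = (of_int k * (1 - Xg) ^ m) * Xg ^ m"
    by (simp add: n three_pow algebra_simps)
  thus "of_int n \<in> Iset m" unfolding Iset_def by (intro CollectI exI[of _ "of_int k * (1 - Xg) ^ m"]) auto
next
  assume "of_int n \<in> Iset m"
  then show "(3::int) ^ m dvd n"
  proof (induction m arbitrary: n)
    case 0 then show ?case by simp
  next
    case (Suc m)
    then obtain x where x: "x \<in> O_set" "of_int n = x * Xg ^ Suc m" unfolding Iset_def by auto
    have "of_int n \<in> Iset m" unfolding Iset_def
      by (intro CollectI exI[of _ "x * Xg"]) (auto simp: x algebra_simps)
    with Suc.IH obtain k where k: "n = 3 ^ m * k" by blast
    obtain u where u: "u \<in> O_set" "(1 - Xg) ^ m = 1 - Xg * u" using unit_pow by blast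
    have "Xg ^ m * ((1 - Xg) ^ m * of_int k) = Xg ^ m * (x * Xg)"
      using x(2) by (simp add: k three_pow algebra_simps)
    hence "(1 - Xg) ^ m * of_int k = x * Xg" using Xg_nz by simp
    hence "of_int k = Xg * (x + u * of_int k)" by (simp add: u algebra_simps)
    hence "3 dvd k" by (rule X_dvd_int) (simp add: u x)
    thus ?case by (simp add: k)
  qed
qed

lemma Xpow_decomp: "\<exists>u\<in>O_set. Xg ^ m = 3 ^ m + Xg ^ Suc m * u"
proof -
  obtain u where u: "u \<in> O_set" "(1 - Xg) ^ m = 1 - Xg * u" using unit_pow by blast
  have "(3::complex) ^ m = Xg ^ m - Xg ^ Suc m * u" by (simp add: three_pow u algebra_simps)
  thus ?thesis using u(1) by (intro bexI[of _ u]) auto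
qed

lemma O_mod_I: "z \<in> O_set \<Longrightarrow> \<exists>n. \<exists>x\<in>O_set. z = of_int n + x * Xg ^ m"
proof (induction m arbitrary: z)
  case 0 then show ?case by (intro exI[of _ 0] bexI[of _ z]) auto
next
  case (Suc m)
  then obtain n w where w: "w \<in> O_set" "z = of_int n + w * Xg ^ m" by blast
  obtain a b where ab: "w = oe a b" using w(1) by (rule O_memE)
  obtain u where u: "u \<in> O_set" "Xg ^ m = 3 ^ m + Xg ^ Suc m * u" using Xpow_decomp by blast
  have "z = of_int n + of_int a * Xg ^ m + of_int b * Xg ^ Suc m"
    by (simp add: w(2) ab oe_def algebra_simps)
  also have "\<dots> = of_int n + of_int a * (3 ^ m + Xg ^ Suc m * u) + of_int b * Xg ^ Suc m"
    using u(2) by simp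
  also have "\<dots> = of_int (n + a * 3 ^ m) + (of_int a * u + of_int b) * Xg ^ Suc m"
    by (simp add: algebra_simps)
  finally have "z = of_int (n + a * 3 ^ m) + (of_int a * u + of_int b) * Xg ^ Suc m" .
  moreover have "of_int a * u + of_int b \<in> O_set" using u(1) by simp
  ultimately show ?case by blast
qed



lemma digit_bound: assumes "digit_seq \<alpha>" shows "\<exists>N. \<forall>j\<ge>N. \<alpha> j = 0"
proof -
  have "finite {j. \<alpha> j \<noteq> 0}" using assms by (simp add: digit_seq_def)
  then obtain N where "\<forall>j\<in>{j. \<alpha> j \<noteq> 0}. j < N" using finite_nat_set_iff_bounded by blast
  thus ?thesis by (metis mem_Collect_eq not_le)
qed

lemma dv_sum: assumes "\<forall>j\<ge>N. \<alpha> j = 0"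
  shows "digit_val \<alpha> = (\<Sum>j<N. of_int (\<alpha> j) * Xg ^ j)"
  unfolding digit_val_def
proof (rule sum.mono_neutral_left)
  show "{j. \<alpha> j \<noteq> 0} \<subseteq> {..<N}" using assms by (auto simp: not_less[symmetric])
qed auto

lemma sumO: "(\<Sum>j<N. of_int (\<alpha> j) * Xg ^ j) \<in> O_set"
  by (induction N) auto

lemma sum_shift: "(\<Sum>j<Suc N. of_int (\<alpha> j) * Xg ^ j) = of_int (\<alpha> 0) + Xg * (\<Sum>j<N. of_int (\<alpha> (Suc j)) * Xg ^ j)"
  unfolding sum.lessThan_Suc_shift by (simp add: sum_distrib_left algebra_simps)

lemma uniq_fin:
  assumes "\<forall>j. \<alpha> j \<in> {-1,0,1}" "\<forall>j. \<beta> j \<in> {-1,0,1}"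
    "(\<Sum>j<N. of_int (\<alpha> j) * Xg ^ j) = (\<Sum>j<N. of_int (\<beta> j) * Xg ^ j)"
  shows "\<forall>j<N. \<alpha> j = \<beta> j"
  using assms
proof (induction N arbitrary: \<alpha> \<beta>)
  case 0 then show ?case by simp
next
  case (Suc N)
  define S where "S = (\<Sum>j<N. of_int (\<alpha> (Suc j)) * Xg ^ j)"
  define T where "T = (\<Sum>j<N. of_int (\<beta> (Suc j)) * Xg ^ j)"
  have eq: "of_int (\<alpha> 0) + Xg * S = of_int (\<beta> 0) + Xg * T"
    using Suc.prems(3) unfolding S_def T_def sum_shift .
  have "of_int (\<alpha> 0 - \<beta> 0) = Xg * (T - S)" using eq by (simp add: algebra_simps)
  moreover have "T - S \<in> O_set" unfolding S_def T_def using sumO by simp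
  ultimately have "3 dvd (\<alpha> 0 - \<beta> 0)" by (rule X_dvd_int)
  moreover have "\<alpha> 0 \<in> {-1,0,1}" "\<beta> 0 \<in> {-1,0,1}" using Suc.prems by auto
  ultimately have h0: "\<alpha> 0 = \<beta> 0" by auto
  hence "Xg * S = Xg * T" using eq by simp
  hence "S = T" using Xg_nz by simp
  have IH: "\<forall>j<N. \<alpha> (Suc j) = \<beta> (Suc j)"
  proof (rule Suc.IH)
    show "\<forall>j. \<alpha> (Suc j) \<in> {-1,0,1}" using Suc.prems(1) by blast
    show "\<forall>j. \<beta> (Suc j) \<in> {-1,0,1}" using Suc.prems(2) by blast
    show "(\<Sum>j<N. of_int (\<alpha> (Suc j)) * Xg ^ j) = (\<Sum>j<N. of_int (\<beta> (Suc j)) * Xg ^ j)"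
      using \<open>S = T\<close> unfolding S_def T_def .
  qed
  show ?case
  proof (intro allI impI)
    fix j assume "j < Suc N"
    thus "\<alpha> j = \<beta> j" using h0 IH by (cases j) auto
  qed
qed

lemma digit_uniq:
  assumes "digit_seq \<alpha>" "digit_seq \<beta>" "digit_val \<alpha> = digit_val \<beta>"
  shows "\<alpha> = \<beta>"
proof -
  obtain N1 where N1: "\<forall>j\<ge>N1. \<alpha> j = 0" using digit_bound assms(1) by blast
  obtain N2 where N2: "\<forall>j\<ge>N2. \<beta> j = 0" using digit_bound assms(2) by blast
  define N where "N = max N1 N2"
  have a: "\<forall>j\<ge>N. \<alpha> j = 0" "\<forall>j\<ge>N. \<beta> j = 0" using N1 N2 by (auto simp: N_def)
  have "\<forall>j<N. \<alpha> j = \<beta> j"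
    by (rule uniq_fin) (use assms a in \<open>auto simp: digit_seq_def dv_sum\<close>)
  show ?thesis
  proof
    fix j show "\<alpha> j = \<beta> j"
    proof (cases "j < N")
      case True thus ?thesis using \<open>\<forall>j<N. \<alpha> j = \<beta> j\<close> by blast
    next
      case False thus ?thesis using a by simp
    qed
  qed
qed

definition normO :: "int \<Rightarrow> int \<Rightarrow> int" where
  "normO a b = a^2 + a*b + 3*b^2"

lemma norm4: "4 * normO a b = (2*a+b)^2 + 11*b^2"
  by (simp add: normO_def power2_eq_square algebra_simps)

lemma norm_small: assumes "normO a b \<le> 1" shows "b = 0 \<and> a \<in> {-1,0,1}"
proof -
  have h: "(2*a+b)^2 + 11*b^2 \<le> 4" using norm4[of a b] assms by linarith
  have "b^2 \<ge> 0" "(2*a+b)^2 \<ge> 0" by auto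
  hence "b^2 = 0" using h by (smt (verit) power2_less_eq_zero_iff zero_less_power2)
  hence b: "b = 0" by simp
  hence "a^2 \<le> 1" using assms by (simp add: normO_def)
  hence "\<bar>a\<bar> \<le> 1" by (metis abs_le_square_iff power_one abs_one)
  thus ?thesis using b by auto
qed

lemma norm_desc:
  fixes a b d e c :: int
  assumes d: "d \<in> {-1,0,1}" and a: "a = d - 3*e" and b: "b = c + e" and N: "normO a b \<ge> 2"
  shows "normO c e < normO a b"
proof -
  define s where "s = 2*a+b"
  have id: "3 * normO c e = normO a b - d*s + d^2"
    unfolding s_def a b normO_def by (simp add: power2_eq_square algebra_simps)
  have d1: "- d*s + d^2 \<le> \<bar>s\<bar> + 1" using d by auto
  have "\<bar>s\<bar> + 1 < 2 * normO a b"
  proof (cases "\<bar>s\<bar> \<le> 2")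
    case True then show ?thesis using N by linarith
  next
    case False
    have "s^2 \<ge> 3 * \<bar>s\<bar>"
    proof -
      have "s^2 = \<bar>s\<bar> * \<bar>s\<bar>" by (simp add: power2_eq_square abs_mult[symmetric])
      also have "\<dots> \<ge> 3 * \<bar>s\<bar>" using False by (intro mult_right_mono) auto
      finally show ?thesis .
    qed
    moreover have "4 * normO a b \<ge> s^2" using norm4[of a b] unfolding s_def by simp
    ultimately show ?thesis using False by linarith
  qed
  thus ?thesis using id d1 by linarith
qed

lemma normO_nonneg: "normO a b \<ge> 0"
  using norm4[of a b] by (smt (verit) zero_le_power2)

lemma digit_exists: "\<exists>\<alpha>. digit_seq \<alpha> \<and> oe a b = digit_val \<alpha>"
proof (induction "nat (normO a b)" arbitrary: a b rule: less_induct)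
  case less
  show ?case
  proof (cases "normO a b \<le> 1")
    case True
    then have ab: "b = 0" "a \<in> {-1,0,1}" using norm_small by auto
    define \<alpha> where "\<alpha> = (\<lambda>j::nat. if j = 0 then a else 0)"
    have "digit_seq \<alpha>" using ab unfolding digit_seq_def \<alpha>_def by auto
    moreover have "digit_val \<alpha> = oe a b"
      by (subst dv_sum[of 1]) (auto simp: \<alpha>_def ab oe_def)
    ultimately show ?thesis by auto
  next
    case False
    define d :: int where "d = (if a mod 3 = 0 then 0 else if a mod 3 = 1 then 1 else -1)"
    have d: "d \<in> {-1,0,1}" unfolding d_def by auto
    have "3 dvd (d - a)" unfolding d_def by presburger
    then obtain e where e: "d - a = 3 * e" by auto
    define c where "c = b - e"
    have a: "a = d - 3*e" and b: "b = c + e" using e c_def by auto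
    have lt: "normO c e < normO a b" by (rule norm_desc[OF d a b]) (use False in auto)
    then obtain \<beta> where \<beta>: "digit_seq \<beta>" "oe c e = digit_val \<beta>"
      using less normO_nonneg[of c e] by fastforce
    obtain N where N: "\<forall>j\<ge>N. \<beta> j = 0" using digit_bound \<beta>(1) by blast
    define \<alpha> where "\<alpha> = (\<lambda>j::nat. if j = 0 then d else \<beta> (j - 1))"
    have N': "\<forall>j\<ge>Suc N. \<alpha> j = 0" using N by (auto simp: \<alpha>_def)
    have "{j. \<alpha> j \<noteq> 0} \<subseteq> {..<Suc N}" using N' by (auto simp: not_less[symmetric])
    hence "finite {j. \<alpha> j \<noteq> 0}" by (rule finite_subset) auto
    hence sa: "digit_seq \<alpha>" using \<beta>(1) d unfolding digit_seq_def \<alpha>_def by auto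
    have "digit_val \<alpha> = (\<Sum>j<Suc N. of_int (\<alpha> j) * Xg ^ j)" by (rule dv_sum[OF N'])
    also have "\<dots> = of_int d + Xg * (\<Sum>j<N. of_int (\<beta> j) * Xg ^ j)"
      by (simp only: sum_shift) (simp add: \<alpha>_def)
    also have "\<dots> = of_int d + Xg * digit_val \<beta>" by (simp add: dv_sum[OF N])
    also have "\<dots> = oe a b"
      unfolding \<beta>(2)[symmetric] a b by (simp add: oe_X oe_mult oe_int oe_add)
    finally show ?thesis using sa by auto
  qed
qed

lemma part1: "\<forall>z\<in>O_set. \<exists>!\<alpha>. digit_seq \<alpha> \<and> z = digit_val \<alpha>"
proof
  fix z assume "z \<in> O_set"
  then obtain a b where z: "z = oe a b" by (rule O_memE)
  show "\<exists>!\<alpha>. digit_seq \<alpha> \<and> z = digit_val \<alpha>"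
  proof -
    obtain \<alpha> where a: "digit_seq \<alpha>" "oe a b = digit_val \<alpha>" using digit_exists[of a b] by blast
    show ?thesis unfolding z
    proof (rule ex1I[of _ \<alpha>])
      show "digit_seq \<alpha> \<and> oe a b = digit_val \<alpha>" using a by blast
      fix \<beta> assume h: "digit_seq \<beta> \<and> oe a b = digit_val \<beta>"
      have "digit_val \<beta> = digit_val \<alpha>" using h a(2) by argo
      thus "\<beta> = \<alpha>" using digit_uniq[of \<beta> \<alpha>] a(1) h by blast
    qed
  qed
qed

lemma part2: "(1 + 1 :: complex) = -1 + Xg - Xg ^ 2"
  by (simp add: Xg_sq)

lemma part3: "(THE \<alpha>. digit_seq \<alpha> \<and> digit_val \<alpha> = 1 + 1) = (\<lambda>j. if j = 0 then -1 else if j = 1 then 1 else if j = 2 then -1 else 0)"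
  (is "_ = ?a")
proof (rule the1_equality)
  have s: "digit_seq ?a" unfolding digit_seq_def
  proof
    have "{j. ?a j \<noteq> 0} \<subseteq> {0,1,2}" by auto
    thus "finite {j. ?a j \<noteq> 0}" by (rule finite_subset) auto
  qed auto
  have v: "digit_val ?a = 1 + 1"
    by (subst dv_sum[of 3]) (auto simp: numeral_3_eq_3 Xg_sq[unfolded power2_eq_square])
  show "digit_seq ?a \<and> digit_val ?a = 1 + 1" using s v by simp
  show "\<exists>!\<alpha>. digit_seq \<alpha> \<and> digit_val \<alpha> = 1 + 1"
  proof (rule ex1I[of _ ?a])
    show "digit_seq ?a \<and> digit_val ?a = 1 + 1" using s v by simp
    fix \<beta> assume "digit_seq \<beta> \<and> digit_val \<beta> = 1 + 1"
    thus "\<beta> = ?a" using digit_uniq[of \<beta> ?a] s v by simp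
  qed
qed



lemma O_ring_cring: "cring O_ring"
proof (rule cringI)
  show "abelian_group O_ring"
    by (rule abelian_groupI) (auto simp: O_ring_def algebra_simps intro: bexI[of _ "- _"])
  show "comm_monoid O_ring"
    by (rule comm_monoidI) (auto simp: O_ring_def algebra_simps)
qed (auto simp: O_ring_def algebra_simps)

lemma carrier_O [simp]: "carrier O_ring = O_set" by (simp add: O_ring_def)
lemma mult_O [simp]: "x \<otimes>\<^bsub>O_ring\<^esub> y = x * y" by (simp add: O_ring_def)
lemma add_O [simp]: "x \<oplus>\<^bsub>O_ring\<^esub> y = x + y" by (simp add: O_ring_def)
lemma one_O [simp]: "\<one>\<^bsub>O_ring\<^esub> = 1" by (simp add: O_ring_def)
lemma zero_O [simp]: "\<zero>\<^bsub>O_ring\<^esub> = 0" by (simp add: O_ring_def)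

lemma PIdl_O: "PIdl\<^bsub>O_ring\<^esub> (Xg ^ m) = Iset m"
  by (simp add: cgenideal_def O_ring_def Iset_def)

lemma ideal_I: "ideal (Iset m) O_ring"
proof -
  have "Xg ^ m \<in> carrier O_ring" by (simp add: O_ring_def)
  from cring.cgenideal_ideal[OF O_ring_cring this] show ?thesis by (simp only: PIdl_O)
qed

definition Jset :: "nat \<Rightarrow> int set" where
  "Jset m = {x * 3 ^ m | x. x \<in> (UNIV :: int set)}"

lemma PIdl_Z: "PIdl\<^bsub>\<Z>\<^esub> (3 ^ m) = Jset m"
  by (simp add: cgenideal_def Jset_def)

lemma ideal_J: "ideal (Jset m) \<Z>"
  using cring.cgenideal_ideal[OF int_is_cring, of "3 ^ m"] by (simp add: PIdl_Z)

lemma Jset_iff: "n \<in> Jset m \<longleftrightarrow> (3::int) ^ m dvd n"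
  by (auto simp: Jset_def dvd_def mult.commute)

lemma Iset_add: assumes "a \<in> Iset m" "b \<in> Iset m" shows "a + b \<in> Iset m"
proof -
  obtain x y where "x \<in> O_set" "y \<in> O_set" "a = x * Xg ^ m" "b = y * Xg ^ m"
    using assms unfolding Iset_def by auto
  thus ?thesis unfolding Iset_def by (intro CollectI exI[of _ "x + y"]) (auto simp: algebra_simps)
qed
lemma Iset_neg: assumes "a \<in> Iset m" shows "- a \<in> Iset m"
proof -
  obtain x where "x \<in> O_set" "a = x * Xg ^ m"
    using assms unfolding Iset_def by auto
  thus ?thesis unfolding Iset_def by (intro CollectI exI[of _ "- x"]) auto
qed
lemma Iset_diff: "a \<in> Iset m \<Longrightarrow> b \<in> Iset m \<Longrightarrow> a - b \<in> Iset m"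
  using Iset_add[of a m "- b"] Iset_neg[of b m] by simp
lemma Iset_mono: "Iset (Suc m) \<subseteq> Iset m"
proof
  fix w assume "w \<in> Iset (Suc m)"
  then obtain x where "x \<in> O_set" "w = x * Xg ^ Suc m" unfolding Iset_def by auto
  thus "w \<in> Iset m" unfolding Iset_def by (intro CollectI exI[of _ "x * Xg"]) (auto simp: algebra_simps)
qed

definition cosO :: "nat \<Rightarrow> complex \<Rightarrow> complex set" where
  "cosO m z = {w. w - z \<in> Iset m}"
definition cosZ :: "nat \<Rightarrow> int \<Rightarrow> int set" where
  "cosZ m k = {n. (3::int) ^ m dvd (n - k)}"

lemma rcosO: "Iset m +>\<^bsub>O_ring\<^esub> z = cosO m z"
  unfolding a_r_coset_def' cosO_def
  by (auto simp: O_ring_def)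

lemma rcosZ: "Jset m +>\<^bsub>\<Z>\<^esub> k = cosZ m k"
  unfolding a_r_coset_def' cosZ_def
  by (auto simp: Jset_iff)

lemma carrO: "carrier (O_ring Quot Iset m) = {cosO m z | z. z \<in> O_set}"
  unfolding FactRing_def A_RCOSETS_def' by (auto simp: rcosO)

lemma carrZ: "carrier (\<Z> Quot Jset m) = {cosZ m k | k. True}"
  unfolding FactRing_def A_RCOSETS_def' by (auto simp: rcosZ)

lemma cosO_eq: "z1 - z2 \<in> Iset m \<Longrightarrow> cosO m z1 = cosO m z2"
  unfolding cosO_def
proof safe
  fix w assume "z1 - z2 \<in> Iset m" "w - z1 \<in> Iset m"
  from Iset_add[OF this(2,1)] show "w - z2 \<in> Iset m" by simp
next
  fix w assume "z1 - z2 \<in> Iset m" "w - z2 \<in> Iset m"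
  from Iset_diff[OF this(2,1)] show "w - z1 \<in> Iset m" by simp
qed

lemma carrO_int: "C \<in> carrier (O_ring Quot Iset m) \<Longrightarrow> \<exists>n. C = cosO m (of_int n)"
proof -
  assume "C \<in> carrier (O_ring Quot Iset m)"
  then obtain z where z: "z \<in> O_set" "C = cosO m z" by (auto simp: carrO)
  obtain n x where "x \<in> O_set" "z = of_int n + x * Xg ^ m" using O_mod_I[OF z(1)] by blast
  hence "z - of_int n \<in> Iset m" unfolding Iset_def by auto
  thus ?thesis using z(2) cosO_eq by blast
qed

lemma cosO_int_carr: "cosO m (of_int n) \<in> carrier (O_ring Quot Iset m)"
  by (auto simp: carrO)

lemma cosZ_carr: "cosZ m k \<in> carrier (\<Z> Quot Jset m)"
  by (auto simp: carrZ)

lemma int_in_cosO: "{n. of_int n \<in> cosO m (of_int k)} = cosZ m k"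
  unfolding cosO_def cosZ_def using int_in_I_iff[of "_ - k" m] by simp

lemma multO: "z1 \<in> O_set \<Longrightarrow> z2 \<in> O_set \<Longrightarrow>
  cosO m z1 \<otimes>\<^bsub>O_ring Quot Iset m\<^esub> cosO m z2 = cosO m (z1 * z2)"
  using ideal.rcoset_mult_add[OF ideal_I[of m], of z1 z2]
  by (simp add: FactRing_def rcosO)

lemma addO: "z1 \<in> O_set \<Longrightarrow> z2 \<in> O_set \<Longrightarrow>
  cosO m z1 \<oplus>\<^bsub>O_ring Quot Iset m\<^esub> cosO m z2 = cosO m (z1 + z2)"
  using ideal.a_rcos_sum[OF ideal_I[of m], of z1 z2]
  by (simp add: FactRing_def rcosO)

lemma oneO: "\<one>\<^bsub>O_ring Quot Iset m\<^esub> = cosO m 1"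
  by (simp add: FactRing_def rcosO[symmetric])

lemma multZ: "cosZ m k1 \<otimes>\<^bsub>\<Z> Quot Jset m\<^esub> cosZ m k2 = cosZ m (k1 * k2)"
  using ideal.rcoset_mult_add[OF ideal_J[of m], of k1 k2]
  by (simp add: FactRing_def rcosZ)

lemma addZ: "cosZ m k1 \<oplus>\<^bsub>\<Z> Quot Jset m\<^esub> cosZ m k2 = cosZ m (k1 + k2)"
  using ideal.a_rcos_sum[OF ideal_J[of m], of k1 k2]
  by (simp add: FactRing_def rcosZ)

lemma oneZ: "\<one>\<^bsub>\<Z> Quot Jset m\<^esub> = cosZ m 1"
  by (simp add: FactRing_def rcosZ[symmetric])



definition Psi :: "(nat \<Rightarrow> complex set) \<Rightarrow> (nat \<Rightarrow> int set)" where
  "Psi g = (\<lambda>m. {n. of_int n \<in> g m})"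

abbreviation "LO \<equiv> quot_limit O_ring Iset"
abbreviation "LZ \<equiv> quot_limit \<Z> Jset"

lemma carrLO: "g \<in> carrier LO \<longleftrightarrow> (\<forall>m. g m \<in> carrier (O_ring Quot Iset m)) \<and> (\<forall>m. g (Suc m) \<subseteq> g m)"
  by (simp add: quot_limit_def)
lemma carrLZ: "f \<in> carrier LZ \<longleftrightarrow> (\<forall>m. f m \<in> carrier (\<Z> Quot Jset m)) \<and> (\<forall>m. f (Suc m) \<subseteq> f m)"
  by (simp add: quot_limit_def)

lemma Psi_cos: "Psi (g::nat \<Rightarrow> complex set) m = (if g m = cosO m (of_int n) then cosZ m n else Psi g m)"
  by (simp add: Psi_def int_in_cosO)

lemma Psi_at: "g m = cosO m (of_int n) \<Longrightarrow> Psi g m = cosZ m n"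
  by (simp add: Psi_def int_in_cosO)

lemma cosZ_eqD: "cosZ m a = cosZ m b \<Longrightarrow> (3::int) ^ m dvd (a - b)"
proof -
  assume "cosZ m a = cosZ m b"
  moreover have "a \<in> cosZ m a" by (simp add: cosZ_def)
  ultimately show ?thesis by (simp add: cosZ_def)
qed

lemma cosO_int_eq: "(3::int) ^ m dvd (a - b) \<Longrightarrow> cosO m (of_int a) = cosO m (of_int b)"
  by (rule cosO_eq) (metis int_in_I_iff of_int_diff)

lemma repLO: "g \<in> carrier LO \<Longrightarrow> \<exists>n. g m = cosO m (of_int n)"
  using carrO_int[of "g m" m] by (simp add: carrLO)

lemma Psi_carr: assumes g: "g \<in> carrier LO" shows "Psi g \<in> carrier LZ"
  unfolding carrLZ
proof safe
  fix m
  obtain n where "g m = cosO m (of_int n)" using repLO[OF g] by blast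
  thus "Psi g m \<in> carrier (\<Z> Quot Jset m)" by (simp add: Psi_at cosZ_carr)
next
  fix m x assume "x \<in> Psi g (Suc m)"
  thus "x \<in> Psi g m" using g by (auto simp: carrLO Psi_def)
qed

lemma Psi_iso: "Psi \<in> ring_iso LO LZ"
proof (rule ring_iso_memI)
  fix g assume g: "g \<in> carrier LO"
  show "Psi g \<in> carrier LZ" by (rule Psi_carr[OF g])
next
  fix g h assume g: "g \<in> carrier LO" and h: "h \<in> carrier LO"
  show "Psi (g \<otimes>\<^bsub>LO\<^esub> h) = Psi g \<otimes>\<^bsub>LZ\<^esub> Psi h"
  proof
    fix m
    obtain n0 where n0: "g m = cosO m (of_int n0)" using repLO[OF g] by blast
    obtain n1 where n1: "h m = cosO m (of_int n1)" using repLO[OF h] by blast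
    have "(g \<otimes>\<^bsub>LO\<^esub> h) m = cosO m (of_int (n0 * n1))"
      by (simp add: quot_limit_def n0 n1 multO)
    hence "Psi (g \<otimes>\<^bsub>LO\<^esub> h) m = cosZ m (n0 * n1)" by (rule Psi_at)
    also have "\<dots> = Psi g m \<otimes>\<^bsub>\<Z> Quot Jset m\<^esub> Psi h m"
      by (simp add: Psi_at[of g m n0, OF n0] Psi_at[of h m n1, OF n1] multZ)
    finally show "Psi (g \<otimes>\<^bsub>LO\<^esub> h) m = (Psi g \<otimes>\<^bsub>LZ\<^esub> Psi h) m"
      by (simp add: quot_limit_def)
  qed
  show "Psi (g \<oplus>\<^bsub>LO\<^esub> h) = Psi g \<oplus>\<^bsub>LZ\<^esub> Psi h"
  proof
    fix m
    obtain n0 where n0: "g m = cosO m (of_int n0)" using repLO[OF g] by blast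
    obtain n1 where n1: "h m = cosO m (of_int n1)" using repLO[OF h] by blast
    have "(g \<oplus>\<^bsub>LO\<^esub> h) m = cosO m (of_int (n0 + n1))"
      by (simp add: quot_limit_def n0 n1 addO)
    hence "Psi (g \<oplus>\<^bsub>LO\<^esub> h) m = cosZ m (n0 + n1)" by (rule Psi_at)
    also have "\<dots> = Psi g m \<oplus>\<^bsub>\<Z> Quot Jset m\<^esub> Psi h m"
      by (simp add: Psi_at[of g m n0, OF n0] Psi_at[of h m n1, OF n1] addZ)
    finally show "Psi (g \<oplus>\<^bsub>LO\<^esub> h) m = (Psi g \<oplus>\<^bsub>LZ\<^esub> Psi h) m"
      by (simp add: quot_limit_def)
  qed
next
  show "Psi \<one>\<^bsub>LO\<^esub> = \<one>\<^bsub>LZ\<^esub>"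
  proof
    fix m
    have "\<one>\<^bsub>LO\<^esub> m = cosO m (of_int 1)" by (simp add: quot_limit_def oneO)
    hence "Psi \<one>\<^bsub>LO\<^esub> m = cosZ m 1" by (rule Psi_at)
    thus "Psi \<one>\<^bsub>LO\<^esub> m = \<one>\<^bsub>LZ\<^esub> m" by (simp add: quot_limit_def oneZ)
  qed
next
  show "bij_betw Psi (carrier LO) (carrier LZ)"
  proof (rule bij_betw_imageI)
    show "inj_on Psi (carrier LO)"
    proof
      fix g h assume g: "g \<in> carrier LO" and h: "h \<in> carrier LO" and e: "Psi g = Psi h"
      show "g = h"
      proof
        fix m
        obtain n0 where n0: "g m = cosO m (of_int n0)" using repLO[OF g] by blast
        obtain n1 where n1: "h m = cosO m (of_int n1)" using repLO[OF h] by blast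
        have "cosZ m n0 = Psi g m" using Psi_at[of g m n0, OF n0] by simp
        also have "\<dots> = Psi h m" using e by simp
        also have "\<dots> = cosZ m n1" using Psi_at[of h m n1, OF n1] by simp
        finally have "cosZ m n0 = cosZ m n1" .
        hence "(3::int) ^ m dvd (n0 - n1)" by (rule cosZ_eqD)
        thus "g m = h m" using n0 n1 cosO_int_eq by simp
      qed
    qed
    show "Psi ` carrier LO = carrier LZ"
    proof
      show "Psi ` carrier LO \<subseteq> carrier LZ" using Psi_carr by blast
    next
      show "carrier LZ \<subseteq> Psi ` carrier LO"
      proof
        fix f assume f: "f \<in> carrier LZ"
        have ex: "\<forall>m. \<exists>k. f m = cosZ m k" using f by (auto simp: carrLZ carrZ)
        define k where "k = (\<lambda>m. SOME k. f m = cosZ m k)"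
        have k: "f m = cosZ m (k m)" for m unfolding k_def by (rule someI_ex[OF spec[OF ex, of m]])
        define g where "g = (\<lambda>m. cosO m (of_int (k m)))"
        have "g \<in> carrier LO" unfolding carrLO
        proof safe
          fix m show "g m \<in> carrier (O_ring Quot Iset m)" by (simp add: g_def cosO_int_carr)
        next
          fix m x assume x: "x \<in> g (Suc m)"
          have "k (Suc m) \<in> f (Suc m)" using k by (simp add: cosZ_def)
          hence "k (Suc m) \<in> f m" using f by (auto simp: carrLZ)
          hence d: "(3::int) ^ m dvd (k (Suc m) - k m)" using k by (simp add: cosZ_def)
          have "x - of_int (k (Suc m)) \<in> Iset m" using x Iset_mono by (auto simp: g_def cosO_def)
          hence "x \<in> cosO m (of_int (k (Suc m)))" by (simp add: cosO_def)
          thus "x \<in> g m" using cosO_int_eq[OF d] by (simp add: g_def)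
        qed
        moreover have "Psi g = f"
        proof
          fix m show "Psi g m = f m" using Psi_at[of g m "k m"] k by (simp add: g_def)
        qed
        ultimately show "f \<in> Psi ` carrier LO" by blast
      qed
    qed
  qed
qed


theorem proposition6p6:
  shows "(\<forall>z\<in>O_set. \<exists>!\<alpha>. digit_seq \<alpha> \<and> z = digit_val \<alpha>)
    \<and> (1 + 1 :: complex) = -1 + Xg - Xg ^ 2
    \<and> (THE \<alpha>. digit_seq \<alpha> \<and> digit_val \<alpha> = 1 + 1) = (\<lambda>j. if j = 0 then -1 else if j = 1 then 1 else if j = 2 then -1 else 0)
    \<and> quot_limit O_ring (\<lambda>m. PIdl\<^bsub>O_ring\<^esub> (Xg ^ m)) \<simeq> Z3_ring"
proof -
  have e1: "(\<lambda>m. PIdl\<^bsub>O_ring\<^esub> (Xg ^ m)) = Iset" by (rule ext) (rule PIdl_O)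
  have e2: "(\<lambda>m. PIdl\<^bsub>\<Z>\<^esub> ((3::int) ^ m)) = Jset" by (rule ext) (rule PIdl_Z)
  have iso: "LO \<simeq> LZ" using Psi_iso unfolding is_ring_iso_def by blast
  have i2: "quot_limit O_ring (\<lambda>m. PIdl\<^bsub>O_ring\<^esub> (Xg ^ m)) \<simeq> Z3_ring"
    unfolding Z3_ring_def e1 e2 by (rule iso)
  show ?thesis using part1 part2 part3 i2 by blast
qed

end
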